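(* Suppose that $I$ is an ideal over an uncountable cardinal $\kappa$ such that $\mathcal{P}(\kappa)/I$ is complete. For any cardinal $\lambda$, if $I$ is not $\lambda$-saturated, then $2^\lambda\leq 2^\kappa$. In particular: (a) $I$ is $2^\kappa$-saturated; (b) if $2^\kappa<2^{\kappa^+}$, then $I$ is $\kappa^+$-saturated.
   Context: An ideal over $\kappa$ means a proper, $\kappa$-complete ideal on $\mathcal{P}(\kappa)$ containing all singletons. $\mathcal{P}(\kappa)/I$ is the quotient Boolean algebra of classes $[A]_I=\{B: A\triangle B\in I\}$. $I$ is $\lambda$-saturated if whenever $\{X_\alpha:\alpha<\lambda\}\subseteq\mathcal{P}(\kappa)\setminus I$ there are $\alpha<\beta<\lambda$ with $X_\alpha\cap X_\beta\notin I$. *)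

theory Defs
  imports Main "HOL-Library.Countable_Set"
begin

text \<open>The cardinal kappa is represented by a set K (its cardinality is card_of K).
  An ideal over kappa: proper, kappa-complete ideal on Pow K containing all singletons.\<close>

definition ideal_over :: "'a set set \<Rightarrow> 'a set \<Rightarrow> bool" where
  "ideal_over I K \<longleftrightarrow>
     I \<subseteq> Pow K \<and>
     K \<notin> I \<and>
     (\<forall>A\<in>I. \<forall>B. B \<subseteq> A \<longrightarrow> B \<in> I) \<and>
     (\<forall>F. F \<subseteq> I \<and> (card_of F, card_of K) \<in> ordLess \<longrightarrow> \<Union>F \<in> I) \<and>
     (\<forall>x\<in>K. {x} \<in> I)"

text \<open>Order of the quotient algebra P(K)/I on representatives: [A] \<le> [B] iff A - B \<in> I.\<close>
definition quot_le :: "'a set set \<Rightarrow> 'a set \<Rightarrow> 'a set \<Rightarrow> bool" where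
  "quot_le I A B \<longleftrightarrow> A - B \<in> I"

definition quotient_complete :: "'a set set \<Rightarrow> 'a set \<Rightarrow> bool" where
  "quotient_complete I K \<longleftrightarrow>
     (\<forall>\<A> \<subseteq> Pow K. \<exists>S \<subseteq> K.
        (\<forall>A\<in>\<A>. quot_le I A S) \<and>
        (\<forall>T \<subseteq> K. (\<forall>A\<in>\<A>. quot_le I A T) \<longrightarrow> quot_le I S T))"

text \<open>I is lambda-saturated, lambda represented by an index set L: every L-indexed family of
  I-positive sets contains two distinct members with I-positive intersection.\<close>
definition saturated :: "'a set set \<Rightarrow> 'a set \<Rightarrow> 'b set \<Rightarrow> bool" where
  "saturated I K L \<longleftrightarrow>
     (\<forall>X. (\<forall>\<alpha>\<in>L. X \<alpha> \<subseteq> K \<and> X \<alpha> \<notin> I) \<longrightarrow>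
          (\<exists>\<alpha>\<in>L. \<exists>\<beta>\<in>L. \<alpha> \<noteq> \<beta> \<and> X \<alpha> \<inter> X \<beta> \<notin> I))"

end

theory Submission
  imports Defs
begin

lemma fin_less_inf: assumes "finite A" and "\<not>finite B" shows "(card_of A, card_of B) \<in> ordLess"
  by (meson assms card_of_Well_order card_of_ordLeq_finite not_ordLeq_iff_ordLess)

lemma ideal_Un:
  assumes "ideal_over I K" "\<not> countable K" "A \<in> I" "B \<in> I"
  shows "A \<union> B \<in> I"
proof -
  have inf: "\<not> finite K" using assms(2) countable_finite by blast
  have "(card_of {A,B}, card_of K) \<in> ordLess" by (rule fin_less_inf) (use inf in auto)
  moreover have "{A,B} \<subseteq> I" using assms by simp
  moreover have "\<forall>F. F \<subseteq> I \<and> (card_of F, card_of K) \<in> ordLess \<longrightarrow> \<Union>F \<in> I"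
    using assms(1) unfolding ideal_over_def by (elim conjE)
  ultimately have "\<Union>{A,B} \<in> I" by blast
  thus ?thesis by simp
qed

lemma ideal_sub: "ideal_over I K \<Longrightarrow> A \<in> I \<Longrightarrow> B \<subseteq> A \<Longrightarrow> B \<in> I"
  unfolding ideal_over_def by (elim conjE) (meson subsetD)

lemma main_part:
  fixes I :: "'a set set" and K :: "'a set" and L :: "'b set"
  assumes cK: "\<not> countable K"
    and id: "ideal_over I K"
    and qc: "quotient_complete I K"
    and ns: "\<not> saturated I K L"
  shows "(card_of (Pow L), card_of (Pow K)) \<in> ordLeq"
proof -
  obtain X where X: "\<And>\<alpha>. \<alpha> \<in> L \<Longrightarrow> X \<alpha> \<subseteq> K \<and> X \<alpha> \<notin> I"
    and dis: "\<And>\<alpha> \<beta>. \<alpha> \<in> L \<Longrightarrow> \<beta> \<in> L \<Longrightarrow> \<alpha> \<noteq> \<beta> \<Longrightarrow> X \<alpha> \<inter> X \<beta> \<in> I"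
  proof -
    have "\<exists>X. (\<forall>\<alpha>\<in>L. X \<alpha> \<subseteq> K \<and> X \<alpha> \<notin> I) \<and> (\<forall>\<alpha>\<in>L. \<forall>\<beta>\<in>L. \<alpha> = \<beta> \<or> X \<alpha> \<inter> X \<beta> \<in> I)"
      using ns unfolding saturated_def by simp
    then obtain X where "(\<forall>\<alpha>\<in>L. X \<alpha> \<subseteq> K \<and> X \<alpha> \<notin> I) \<and> (\<forall>\<alpha>\<in>L. \<forall>\<beta>\<in>L. \<alpha> = \<beta> \<or> X \<alpha> \<inter> X \<beta> \<in> I)"
      by (elim exE)
    thus ?thesis using that by blast
  qed
  define sup where "sup S = (SOME T. T \<subseteq> K \<and> (\<forall>A\<in>X ` S. quot_le I A T) \<and>
        (\<forall>T' \<subseteq> K. (\<forall>A\<in>X ` S. quot_le I A T') \<longrightarrow> quot_le I T T'))" for S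
  have supP: "sup S \<subseteq> K \<and> (\<forall>A\<in>X ` S. quot_le I A (sup S)) \<and>
        (\<forall>T' \<subseteq> K. (\<forall>A\<in>X ` S. quot_le I A T') \<longrightarrow> quot_le I (sup S) T')" if "S \<subseteq> L" for S
  proof -
    have "X ` S \<subseteq> Pow K" using X that by blast
    then obtain T where "T \<subseteq> K \<and> (\<forall>A\<in>X ` S. quot_le I A T) \<and>
        (\<forall>T' \<subseteq> K. (\<forall>A\<in>X ` S. quot_le I A T') \<longrightarrow> quot_le I T T')"
      using qc[unfolded quotient_complete_def, rule_format, OF \<open>X ` S \<subseteq> Pow K\<close>] by (elim exE)
    thus ?thesis unfolding sup_def by (rule someI)
  qed
  have key: "sup S \<inter> X \<alpha> \<in> I" if "S \<subseteq> L" "\<alpha> \<in> L" "\<alpha> \<notin> S" for S \<alpha>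
  proof -
    let ?T = "sup S - X \<alpha>"
    have "\<forall>A\<in>X ` S. quot_le I A ?T"
    proof
      fix A assume "A \<in> X ` S"
      then obtain \<beta> where b: "\<beta> \<in> S" "A = X \<beta>" by blast
      have "\<beta> \<noteq> \<alpha>" using b that by blast
      have "\<forall>A\<in>X ` S. quot_le I A (sup S)" using supP[OF that(1)] by (elim conjE)
      hence i1: "X \<beta> - sup S \<in> I" using b unfolding quot_le_def by simp
      have i2: "X \<beta> \<inter> X \<alpha> \<in> I" using dis b that \<open>\<beta> \<noteq> \<alpha>\<close> by blast
      have "(X \<beta> - sup S) \<union> (X \<beta> \<inter> X \<alpha>) \<in> I" by (rule ideal_Un[OF id cK i1 i2])
      moreover have "A - ?T \<subseteq> (X \<beta> - sup S) \<union> (X \<beta> \<inter> X \<alpha>)" using b by blast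
      ultimately show "quot_le I A ?T" unfolding quot_le_def by (rule ideal_sub[OF id])
    qed
    moreover have "?T \<subseteq> K" using supP[OF that(1)] by blast
    moreover have "\<forall>T' \<subseteq> K. (\<forall>A\<in>X ` S. quot_le I A T') \<longrightarrow> quot_le I (sup S) T'" using supP[OF that(1)] by (elim conjE)
    ultimately have "quot_le I (sup S) ?T" by blast
    thus ?thesis unfolding quot_le_def by (simp add: Diff_Diff_Int Int_commute)
  qed
  have "inj_on sup (Pow L)"
  proof (rule inj_onI, rule ccontr)
    fix S S' assume S: "S \<in> Pow L" "S' \<in> Pow L" and eq: "sup S = sup S'" and ne: "S \<noteq> S'"
    have "\<exists>\<alpha> S1 S2. S1 \<subseteq> L \<and> S2 \<subseteq> L \<and> \<alpha> \<in> S1 \<and> \<alpha> \<notin> S2 \<and> sup S1 = sup S2"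
    proof -
      obtain \<alpha> where "\<alpha> \<in> S - S' \<or> \<alpha> \<in> S' - S" using ne by blast
      thus ?thesis
      proof
        assume "\<alpha> \<in> S - S'" thus ?thesis using S eq by (intro exI[of _ \<alpha>] exI[of _ S] exI[of _ S']) auto
      next
        assume "\<alpha> \<in> S' - S" thus ?thesis using S eq by (intro exI[of _ \<alpha>] exI[of _ S'] exI[of _ S]) auto
      qed
    qed
    then obtain \<alpha> S1 S2 where h: "S1 \<subseteq> L" "S2 \<subseteq> L" "\<alpha> \<in> S1" "\<alpha> \<notin> S2" "sup S1 = sup S2"
      by blast
    have aL: "\<alpha> \<in> L" using h by blast
    have "\<forall>A\<in>X ` S1. quot_le I A (sup S1)" using supP[OF h(1)] by (elim conjE)
    hence i1: "X \<alpha> - sup S1 \<in> I" using h(3) unfolding quot_le_def by simp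
    have i2: "sup S1 \<inter> X \<alpha> \<in> I" using key[OF h(2) aL h(4)] h(5) by simp
    have "(X \<alpha> - sup S1) \<union> (sup S1 \<inter> X \<alpha>) \<in> I" by (rule ideal_Un[OF id cK i1 i2])
    moreover have "(X \<alpha> - sup S1) \<union> (sup S1 \<inter> X \<alpha>) = X \<alpha>" by blast
    ultimately show False using X[OF aL] by simp
  qed
  moreover have "sup ` Pow L \<subseteq> Pow K" using supP by auto
  ultimately show ?thesis using card_of_ordLeq[of "Pow L" "Pow K"] by blast
qed

theorem lemma1p1:
  fixes I :: "'a set set" and K :: "'a set"
  assumes "\<not> countable K"
    and "ideal_over I K"
    and "quotient_complete I K"
  shows "(\<forall>L :: 'b set. \<not> saturated I K L \<longrightarrow> (card_of (Pow L), card_of (Pow K)) \<in> ordLeq)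
         \<and> saturated I K (Pow K)
         \<and> ( (card_of (Pow K), card_of (Pow (Field (cardSuc (card_of K))))) \<in> ordLess \<longrightarrow> saturated I K (Field (cardSuc (card_of K))))"
proof (intro conjI allI impI)
  fix L :: "'b set" assume "\<not> saturated I K L"
  thus "(card_of (Pow L), card_of (Pow K)) \<in> ordLeq" using main_part assms by blast
next
  show "saturated I K (Pow K)"
  proof (rule ccontr)
    assume "\<not> saturated I K (Pow K)"
    hence "(card_of (Pow (Pow K)), card_of (Pow K)) \<in> ordLeq" using main_part assms by blast
    thus False using card_of_Pow[of "Pow K"] not_ordLess_ordLeq by blast
  qed
next
  assume l: "(card_of (Pow K), card_of (Pow (Field (cardSuc (card_of K))))) \<in> ordLess"
  show "saturated I K (Field (cardSuc (card_of K)))"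
  proof (rule ccontr)
    assume "\<not> saturated I K (Field (cardSuc (card_of K)))"
    hence "(card_of (Pow (Field (cardSuc (card_of K)))), card_of (Pow K)) \<in> ordLeq" using main_part assms by blast
    thus False using l not_ordLess_ordLeq by blast
  qed
qed

end
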